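(* Let $c\ge2$ and let $d$ be an integer with $1\le d\le c-1$. For every $c$-uniform unoriented hypergraph $\Gamma$ with $E\neq\varnothing$ (and no isolated vertices), with smallest normalized Laplacian eigenvalue $\lambda_1$ (which satisfies $\lambda_1<1$), the $d$-proper coloring number satisfies \[ \chi_d(\Gamma)\;\ge\;\frac{c-\lambda_1}{d-\lambda_1}. \] Moreover, the bound is sharp if and only if $d\mid c$: if equality holds for some such $\Gamma$ then $d\mid c$, and conversely if $d\mid c$ then there exists a $c$-uniform unoriented hypergraph for which equality holds.
   Context: A hypergraph has finite vertex set $V$, $|V|=N$, and edge set $E\subseteq\mathcal P(V)$; it is $c$-uniform if $|e|=c$ for all $e\in E$, and unoriented means all vertex–edge incidences have orientation $+1$. The degree $\deg v=|\{e\in E: v\in e\}|$ is assumed $\ge1$; $D=\mathrm{diag}(\deg v)$. The adjacency matrix has $A_{v,v}=0$ and $A_{v,w}=-|\{e\in E: v,w\in e\}|$ for $v\ne w$; the normalized Laplacian is $L=\mathrm{Id}-D^{-1}A$ with real eigenvalues $\lambda_1\le\dots\le\lambda_N$. For an integer $d\ge1$, a $k$-coloring $V\to\{1,\dots,k\}$ is $d$-proper if every edge contains at most $d$ vertices of each color; $\chi_d(\Gamma)$ is the least $k$ admitting a $d$-proper $k$-coloring. *)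

theory Defs
  imports Complex_Main
begin

text \<open>A hypergraph is given by a finite vertex set V and an edge set E of subsets of V.
  All incidences are unoriented (orientation +1).\<close>

definition uniform_hypergraph :: "nat \<Rightarrow> 'a set \<Rightarrow> 'a set set \<Rightarrow> bool" where
  "uniform_hypergraph c V E \<longleftrightarrow> finite V \<and> E \<subseteq> Pow V \<and> (\<forall>e\<in>E. card e = c)"

definition hdeg :: "'a set set \<Rightarrow> 'a \<Rightarrow> nat" where
  "hdeg E v = card {e\<in>E. v \<in> e}"

definition no_isolated :: "'a set \<Rightarrow> 'a set set \<Rightarrow> bool" where
  "no_isolated V E \<longleftrightarrow> (\<forall>v\<in>V. hdeg E v \<ge> 1)"

definition hadj :: "'a set set \<Rightarrow> 'a \<Rightarrow> 'a \<Rightarrow> real" where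
  "hadj E v w = (if v = w then 0 else - real (card {e\<in>E. v \<in> e \<and> w \<in> e}))"

definition hlap :: "'a set set \<Rightarrow> 'a \<Rightarrow> 'a \<Rightarrow> real" where
  "hlap E v w = (if v = w then 1 else 0) - hadj E v w / real (hdeg E v)"

text \<open>Eigenvalues of L (all eigenvalues of L are real, so real eigenvectors suffice).\<close>
definition lap_eigenvalue :: "'a set \<Rightarrow> 'a set set \<Rightarrow> real \<Rightarrow> bool" where
  "lap_eigenvalue V E mu \<longleftrightarrow>
     (\<exists>f :: 'a \<Rightarrow> real. (\<exists>v\<in>V. f v \<noteq> 0) \<and>
        (\<forall>v\<in>V. (\<Sum>w\<in>V. hlap E v w * f w) = mu * f v))"

definition lambda_min :: "'a set \<Rightarrow> 'a set set \<Rightarrow> real" where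
  "lambda_min V E = Min {mu. lap_eigenvalue V E mu}"

definition d_proper_coloring :: "nat \<Rightarrow> nat \<Rightarrow> 'a set \<Rightarrow> 'a set set \<Rightarrow> ('a \<Rightarrow> nat) \<Rightarrow> bool" where
  "d_proper_coloring d k V E col \<longleftrightarrow>
     (\<forall>v\<in>V. col v \<in> {1..k}) \<and> (\<forall>e\<in>E. \<forall>i. card {v\<in>e. col v = i} \<le> d)"

definition chi_d :: "nat \<Rightarrow> 'a set \<Rightarrow> 'a set set \<Rightarrow> nat" where
  "chi_d d V E = (LEAST k. \<exists>col. d_proper_coloring d k V E col)"

end

theory Submission imports Defs "HOL-Analysis.Analysis" "Jordan_Normal_Form.Char_Poly" begin
lemma eig_finite:
  assumes fin: "finite V"
  shows "finite {mu. lap_eigenvalue V E mu}"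
proof -
  obtain xs where xs: "set xs = V" "distinct xs" using finite_distinct_list[OF fin] by blast
  define n where "n = length xs"
  define M :: "real mat" where "M = mat n n (\<lambda>(i,j). hlap E (xs!i) (xs!j))"
  have M: "M \<in> carrier_mat n n" unfolding M_def by simp
  have bij: "bij_betw ((!) xs) {..<n} V" using bij_betw_nth[OF xs(2)] xs(1) n_def by auto
  have "{mu. lap_eigenvalue V E mu} \<subseteq> {k. poly (char_poly M) k = 0}"
  proof
    fix mu assume "mu \<in> {mu. lap_eigenvalue V E mu}"
    then obtain f where f: "\<exists>v\<in>V. f v \<noteq> 0" "\<forall>v\<in>V. (\<Sum>w\<in>V. hlap E v w * f w) = mu * f v"
      unfolding lap_eigenvalue_def by blast
    define u :: "real vec" where "u = vec n (\<lambda>i. f (xs!i))"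
    have uc: "u \<in> carrier_vec n" unfolding u_def by simp
    have "u \<noteq> 0\<^sub>v n"
    proof
      assume u0: "u = 0\<^sub>v n"
      from f(1) obtain v where "v \<in> V" "f v \<noteq> 0" by blast
      then obtain i where "i < n" "xs ! i = v" using xs(1) n_def by (auto simp: in_set_conv_nth)
      then have "u $ i = f v" unfolding u_def by simp
      with u0 \<open>i<n\<close> \<open>f v \<noteq> 0\<close> show False by simp
    qed
    moreover have "M *\<^sub>v u = mu \<cdot>\<^sub>v u"
    proof (rule eq_vecI)
      fix i assume i: "i < dim_vec (mu \<cdot>\<^sub>v u)"
      then have i': "i < n" unfolding u_def by simp
      have "(M *\<^sub>v u) $ i = (\<Sum>j<n. hlap E (xs!i) (xs!j) * f (xs!j))"
        using i' M unfolding M_def u_def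
        by (simp add: scalar_prod_def lessThan_atLeast0)
      also have "\<dots> = (\<Sum>w\<in>V. hlap E (xs!i) w * f w)"
        using sum.reindex_bij_betw[OF bij, of "\<lambda>w. hlap E (xs!i) w * f w"] by simp
      also have "\<dots> = mu * f (xs!i)" using f(2) i' xs(1) n_def by auto
      finally show "(M *\<^sub>v u) $ i = (mu \<cdot>\<^sub>v u) $ i" using i' unfolding u_def by simp
    qed (simp add: M_def u_def)
    ultimately have "eigenvalue M mu" unfolding eigenvalue_def eigenvector_def using uc M by auto
    then show "mu \<in> {k. poly (char_poly M) k = 0}" using eigenvalue_root_char_poly[OF M] by simp
  qed
  moreover have "char_poly M \<noteq> 0"
    using degree_monic_char_poly[OF M] by auto
  ultimately show ?thesis using poly_roots_finite finite_subset by blast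
qed

definition QF :: "'a set set \<Rightarrow> ('a \<Rightarrow> real) \<Rightarrow> real" where
  "QF E f = (\<Sum>e\<in>E. (\<Sum>v\<in>e. f v)^2)"

definition NF :: "'a set \<Rightarrow> 'a set set \<Rightarrow> ('a \<Rightarrow> real) \<Rightarrow> real" where
  "NF V E f = (\<Sum>v\<in>V. real (hdeg E v) * (f v)^2)"

lemma finite_E: "finite V \<Longrightarrow> E \<subseteq> Pow V \<Longrightarrow> finite E"
  by (meson finite_Pow_iff finite_subset)

lemma finite_edge: "finite V \<Longrightarrow> E \<subseteq> Pow V \<Longrightarrow> e \<in> E \<Longrightarrow> finite e"
  by (meson PowD finite_subset subsetD)

lemma sum_indicator_card:
  assumes "finite A"
  shows "(\<Sum>x\<in>A. if P x then (1::real) else 0) = real (card {x\<in>A. P x})"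
  using sum.inter_filter[OF assms, of "\<lambda>_. (1::real)" P] by simp

lemma double_count:
  assumes fin: "finite V" and sub: "E \<subseteq> Pow V"
  shows "(\<Sum>e\<in>E. \<Sum>v\<in>e. g v e) = (\<Sum>v\<in>V. \<Sum>e\<in>{e\<in>E. v\<in>e}. (g v e :: real))"
proof -
  have fE: "finite E" using finite_E[OF fin sub] .
  have "(\<Sum>e\<in>E. \<Sum>v\<in>e. g v e) = (\<Sum>e\<in>E. \<Sum>v\<in>V. if v \<in> e then g v e else 0)"
  proof (rule sum.cong[OF refl])
    fix e assume "e \<in> E"
    then have "{v\<in>V. v \<in> e} = e" using sub by auto
    then show "(\<Sum>v\<in>e. g v e) = (\<Sum>v\<in>V. if v \<in> e then g v e else 0)"
      using sum.inter_filter[OF fin, of "\<lambda>v. g v e" "\<lambda>v. v \<in> e"] by simp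
  qed
  also have "\<dots> = (\<Sum>v\<in>V. \<Sum>e\<in>E. if v \<in> e then g v e else 0)"
    by (rule sum.swap)
  also have "\<dots> = (\<Sum>v\<in>V. \<Sum>e\<in>{e\<in>E. v\<in>e}. g v e)"
    by (rule sum.cong[OF refl], rule sum.inter_filter[OF fE, symmetric])
  finally show ?thesis .
qed

lemma handshake:
  assumes fin: "finite V" and sub: "E \<subseteq> Pow V"
  shows "(\<Sum>v\<in>V. real (hdeg E v)) = (\<Sum>e\<in>E. real (card e))"
  using double_count[OF fin sub, of "\<lambda>v e. 1"] by (simp add: hdeg_def)

lemma deg_lap:
  assumes "hdeg E v \<ge> 1"
  shows "real (hdeg E v) * hlap E v w = real (card {e\<in>E. v\<in>e \<and> w\<in>e})"
proof (cases "v = w")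
  case True
  then show ?thesis using assms by (simp add: hlap_def hadj_def hdeg_def)
next
  case False
  then show ?thesis using assms by (simp add: hlap_def hadj_def hdeg_def)
qed

lemma lap_sum:
  assumes fin: "finite V" and sub: "E \<subseteq> Pow V" and dv: "hdeg E v \<ge> 1"
  shows "real (hdeg E v) * (\<Sum>w\<in>V. hlap E v w * f w) = (\<Sum>e\<in>{e\<in>E. v\<in>e}. \<Sum>w\<in>e. f w)"
proof -
  have fE: "finite E" using finite_E[OF fin sub] .
  have "real (hdeg E v) * (\<Sum>w\<in>V. hlap E v w * f w) = (\<Sum>w\<in>V. real (card {e\<in>E. v\<in>e \<and> w\<in>e}) * f w)"
    by (simp add: sum_distrib_left deg_lap[OF dv, symmetric] mult.assoc)
  also have "\<dots> = (\<Sum>w\<in>V. \<Sum>e\<in>{e\<in>E. w\<in>e}. if v \<in> e then f w else 0)"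
  proof (rule sum.cong[OF refl])
    fix w assume "w \<in> V"
    have "real (card {e\<in>E. v\<in>e \<and> w\<in>e}) * f w = (\<Sum>e\<in>E. if v\<in>e \<and> w\<in>e then 1 else 0) * f w"
      using sum_indicator_card[OF fE] by simp
    also have "\<dots> = (\<Sum>e\<in>E. if w\<in>e then (if v \<in> e then f w else 0) else 0)"
      by (simp add: sum_distrib_right) (rule sum.cong, auto)
    also have "\<dots> = (\<Sum>e\<in>{e\<in>E. w\<in>e}. if v \<in> e then f w else 0)"
      by (rule sum.inter_filter[OF fE, symmetric])
    finally show "real (card {e\<in>E. v\<in>e \<and> w\<in>e}) * f w = (\<Sum>e\<in>{e\<in>E. w\<in>e}. if v \<in> e then f w else 0)" .
  qed
  also have "\<dots> = (\<Sum>e\<in>E. \<Sum>w\<in>e. if v \<in> e then f w else 0)"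
    using double_count[OF fin sub, of "\<lambda>w e. if v \<in> e then f w else 0"] by simp
  also have "\<dots> = (\<Sum>e\<in>E. if v \<in> e then (\<Sum>w\<in>e. f w) else 0)"
    by (rule sum.cong) auto
  also have "\<dots> = (\<Sum>e\<in>{e\<in>E. v\<in>e}. \<Sum>w\<in>e. f w)"
    by (rule sum.inter_filter[OF fE, symmetric])
  finally show ?thesis .
qed

lemma eig_to_rayleigh:
  assumes fin: "finite V" and sub: "E \<subseteq> Pow V" and nis: "\<forall>v\<in>V. hdeg E v \<ge> 1"
    and eig: "\<forall>v\<in>V. (\<Sum>w\<in>V. hlap E v w * f w) = mu * f v"
  shows "QF E f = mu * NF V E f"
proof -
  have "QF E f = (\<Sum>e\<in>E. \<Sum>v\<in>e. f v * (\<Sum>w\<in>e. f w))"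
    unfolding QF_def power2_eq_square by (simp add: sum_distrib_right)
  also have "\<dots> = (\<Sum>v\<in>V. \<Sum>e\<in>{e\<in>E. v\<in>e}. f v * (\<Sum>w\<in>e. f w))"
    by (rule double_count[OF fin sub])
  also have "\<dots> = (\<Sum>v\<in>V. f v * (real (hdeg E v) * (\<Sum>w\<in>V. hlap E v w * f w)))"
  proof (rule sum.cong[OF refl])
    fix v assume v: "v \<in> V"
    have "(\<Sum>e\<in>{e\<in>E. v\<in>e}. f v * (\<Sum>w\<in>e. f w)) = f v * (\<Sum>e\<in>{e\<in>E. v\<in>e}. \<Sum>w\<in>e. f w)"
      by (simp add: sum_distrib_left)
    also have "\<dots> = f v * (real (hdeg E v) * (\<Sum>w\<in>V. hlap E v w * f w))"
      using lap_sum[OF fin sub, of v f] nis v by simp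
    finally show "(\<Sum>e\<in>{e\<in>E. v\<in>e}. f v * (\<Sum>w\<in>e. f w)) = f v * (real (hdeg E v) * (\<Sum>w\<in>V. hlap E v w * f w))" .
  qed
  also have "\<dots> = (\<Sum>v\<in>V. mu * (real (hdeg E v) * (f v)^2))"
    by (rule sum.cong[OF refl]) (simp add: eig power2_eq_square)
  also have "\<dots> = mu * NF V E f" unfolding NF_def by (simp add: sum_distrib_left)
  finally show ?thesis .
qed

lemma NF_nonneg: "NF V E f \<ge> 0"
  unfolding NF_def by (intro sum_nonneg) simp

lemma QF_nonneg: "QF E f \<ge> 0"
  unfolding QF_def by (intro sum_nonneg) simp

lemma NF_pos:
  assumes fin: "finite V" and nis: "\<forall>v\<in>V. hdeg E v \<ge> 1" and v: "v \<in> V" "f v \<noteq> 0"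
  shows "NF V E f > 0"
proof -
  have d: "real (hdeg E v) > 0" using nis v by fastforce
  have "0 < real (hdeg E v) * (f v)^2" using d v(2) by simp
  also have "\<dots> \<le> NF V E f" unfolding NF_def
    by (rule member_le_sum[OF v(1) _ fin]) simp
  finally show ?thesis .
qed

lemma quad_zero:
  fixes a b :: real
  assumes "\<forall>t. 0 \<le> 2 * t * a + t^2 * b"
  shows "a = 0"
proof (rule ccontr)
  assume a: "a \<noteq> 0"
  define B where "B = \<bar>b\<bar> + 1"
  have B: "B > 0" "b - 2 * B < 0" unfolding B_def by auto
  have "0 \<le> 2 * (- a / B) * a + (- a / B)^2 * b" using assms by blast
  then have "0 \<le> (2 * (- a / B) * a + (- a / B)^2 * b) * B^2" using B by simp
  also have "(2 * (- a / B) * a + (- a / B)^2 * b) * B^2 = a^2 * (b - 2 * B)"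
    using B by (simp add: field_simps power2_eq_square)
  finally have "0 \<le> a^2 * (b - 2 * B)" .
  moreover have "a^2 > 0" using a by simp
  ultimately show False using B mult_pos_neg by (metis not_le)
qed


lemma NF_scale: "NF V E (\<lambda>v. s * f v) = s^2 * NF V E f"
  unfolding NF_def by (simp add: sum_distrib_left power_mult_distrib algebra_simps)

lemma QF_scale: "QF E (\<lambda>v. s * f v) = s^2 * QF E f"
  unfolding QF_def by (simp add: sum_distrib_left[symmetric] power_mult_distrib)

lemma rayleigh_to_eig:
  assumes fin: "finite V" and sub: "E \<subseteq> Pow V" and nis: "\<forall>v\<in>V. hdeg E v \<ge> 1"
    and h: "\<forall>v\<in>V. (\<Sum>e\<in>{e\<in>E. v\<in>e}. \<Sum>w\<in>e. g w) = rho * real (hdeg E v) * g v"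
  shows "\<forall>v\<in>V. (\<Sum>w\<in>V. hlap E v w * g w) = rho * g v"
proof
  fix v assume v: "v \<in> V"
  have d: "real (hdeg E v) \<noteq> 0" using nis v by fastforce
  have "real (hdeg E v) * (\<Sum>w\<in>V. hlap E v w * g w) = real (hdeg E v) * (rho * g v)"
    using lap_sum[OF fin sub, of v g] nis v h by simp
  then show "(\<Sum>w\<in>V. hlap E v w * g w) = rho * g v" using d by simp
qed

lemma lagrange:
  assumes fin: "finite V" and sub: "E \<subseteq> Pow V" and u: "u \<in> V"
    and minf: "\<forall>f. rho * NF V E f \<le> QF E f" and eqg: "QF E g = rho * NF V E g"
  shows "(\<Sum>e\<in>{e\<in>E. u\<in>e}. \<Sum>w\<in>e. g w) = rho * real (hdeg E u) * g u"
proof -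
  have fE: "finite E" using finite_E[OF fin sub] .
  define A where "A = (\<Sum>e\<in>{e\<in>E. u\<in>e}. \<Sum>w\<in>e. g w)"
  define du where "du = real (hdeg E u)"
  have key: "0 \<le> 2 * t * (A - rho * du * g u) + t^2 * (du - rho * du)" for t
  proof -
    define ft where "ft = (\<lambda>w. g w + (if w = u then t else 0))"
    have S: "(\<Sum>w\<in>e. ft w) = (\<Sum>w\<in>e. g w) + (if u \<in> e then t else 0)" if "e \<in> E" for e
    proof -
      have "finite e" using finite_edge[OF fin sub that] .
      then show ?thesis unfolding ft_def by (simp add: sum.distrib)
    qed
    have "QF E ft = (\<Sum>e\<in>E. (\<Sum>w\<in>e. g w)^2 + (if u \<in> e then 2 * t * (\<Sum>w\<in>e. g w) + t^2 else 0))"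
      unfolding QF_def by (rule sum.cong[OF refl]) (auto simp: S power2_eq_square algebra_simps)
    also have "\<dots> = QF E g + (\<Sum>e\<in>E. if u \<in> e then 2 * t * (\<Sum>w\<in>e. g w) + t^2 else 0)"
      unfolding QF_def by (simp add: sum.distrib)
    also have "(\<Sum>e\<in>E. if u \<in> e then 2 * t * (\<Sum>w\<in>e. g w) + t^2 else 0)
        = (\<Sum>e\<in>{e\<in>E. u\<in>e}. 2 * t * (\<Sum>w\<in>e. g w) + t^2)"
      by (rule sum.inter_filter[OF fE, symmetric])
    also have "\<dots> = 2 * t * A + t^2 * du"
      unfolding A_def du_def hdeg_def by (simp add: sum.distrib sum_distrib_left)
    finally have Q: "QF E ft = QF E g + 2 * t * A + t^2 * du" by simp
    have "NF V E ft = (\<Sum>v\<in>V. real (hdeg E v) * (g v)^2 + (if v = u then du * (2 * t * g u + t^2) else 0))"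
      unfolding NF_def ft_def du_def by (rule sum.cong[OF refl]) (auto simp: power2_eq_square algebra_simps)
    also have "\<dots> = NF V E g + du * (2 * t * g u + t^2)"
      unfolding NF_def using u fin by (simp add: sum.distrib)
    finally have N: "NF V E ft = NF V E g + du * (2 * t * g u + t^2)" .
    have "rho * NF V E ft \<le> QF E ft" using minf by blast
    then have "rho * (NF V E g + du * (2 * t * g u + t^2)) \<le> QF E g + 2 * t * A + t^2 * du"
      using Q N by simp
    moreover have "2 * t * (A - rho * du * g u) + t^2 * (du - rho * du)
       = (QF E g + 2 * t * A + t^2 * du) - rho * (NF V E g + du * (2 * t * g u + t^2))"
      by (simp add: eqg algebra_simps)
    ultimately show ?thesis by linarith
  qed
  have "A - rho * du * g u = 0" by (rule quad_zero) (use key in blast)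
  then show ?thesis unfolding A_def du_def by simp
qed

lemma minimizer:
  assumes fin: "finite V" and sub: "E \<subseteq> Pow V" and nis: "\<forall>v\<in>V. hdeg E v \<ge> 1" and ne: "V \<noteq> {}"
  shows "\<exists>g. NF V E g = 1 \<and> (\<forall>f. QF E g * NF V E f \<le> QF E f)"
proof -
  define S where "S = (\<lambda>v::'a. if v \<in> V then {-1..1::real} else {0})"
  define K0 where "K0 = Pi UNIV S"
  have cK0: "compact K0"
  proof -
    have "compactin (product_topology (\<lambda>i. euclidean) UNIV) (Pi\<^sub>E UNIV S)"
      unfolding S_def by (subst compactin_PiE) (auto simp: compactin_euclidean_iff)
    then show ?thesis unfolding K0_def by (simp add: euclidean_product_topology compactin_euclidean_iff PiE_UNIV_domain)
  qed
  have contN: "continuous_on UNIV (NF V E)"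
    unfolding NF_def
    by (intro continuous_on_sum continuous_on_mult continuous_on_const continuous_on_power continuous_on_product_coordinates)
  have contQ: "continuous_on UNIV (QF E)"
    unfolding QF_def
    by (intro continuous_on_sum continuous_on_mult continuous_on_const continuous_on_power continuous_on_product_coordinates)
  define K where "K = K0 \<inter> {f. NF V E f = 1}"
  have cK: "compact K" unfolding K_def
    by (rule compact_Int_closed[OF cK0 closed_Collect_eq[OF contN continuous_on_const]])
  obtain v0 where v0: "v0 \<in> V" using ne by blast
  define d0 where "d0 = real (hdeg E v0)"
  have d0: "d0 \<ge> 1" using nis v0 unfolding d0_def by fastforce
  define f0 where "f0 = (\<lambda>v. if v = v0 then 1 / sqrt d0 else 0)"
  have "sqrt d0 \<ge> 1" using d0 by simp
  then have f0r: "1 / sqrt d0 \<le> 1" "0 < 1 / sqrt d0" by (auto simp: divide_le_eq)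
  have f0r3: "-1 \<le> 1 / sqrt d0" using f0r(2) by linarith
  have "f0 \<in> K0" unfolding K0_def S_def f0_def using f0r f0r3 v0 by auto
  moreover have "NF V E f0 = 1"
  proof -
    have "NF V E f0 = (\<Sum>v\<in>V. if v = v0 then d0 * (1 / sqrt d0)^2 else 0)"
      unfolding NF_def f0_def d0_def by (rule sum.cong) auto
    also have "\<dots> = d0 * (1 / sqrt d0)^2" using v0 fin by simp
    also have "\<dots> = 1" using d0 by (simp add: power_divide)
    finally show ?thesis .
  qed
  ultimately have Kne: "K \<noteq> {}" unfolding K_def by blast
  obtain g where g: "g \<in> K" "\<forall>y\<in>K. QF E g \<le> QF E y"
    using continuous_attains_inf[OF cK Kne continuous_on_subset[OF contQ]] by blast
  have "QF E g * NF V E f \<le> QF E f" for f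
  proof -
    define f' where "f' = (\<lambda>v. if v \<in> V then f v else 0)"
    have Qf': "QF E f' = QF E f" unfolding QF_def f'_def
    proof (rule sum.cong[OF refl])
      fix e assume "e \<in> E"
      then have "e \<subseteq> V" using sub by auto
      then have "(\<Sum>v\<in>e. if v \<in> V then f v else 0) = (\<Sum>v\<in>e. f v)"
        by (intro sum.cong) auto
      then show "(\<Sum>v\<in>e. if v \<in> V then f v else 0)^2 = (\<Sum>v\<in>e. f v)^2"
        by simp
    qed
    have Nf': "NF V E f' = NF V E f" unfolding NF_def f'_def by (rule sum.cong) auto
    show ?thesis
    proof (cases "NF V E f = 0")
      case True
      then show ?thesis using QF_nonneg[of E f] by simp
    next
      case False
      then have pos: "NF V E f > 0" using NF_nonneg[of V E f] by simp
      define s where "s = 1 / sqrt (NF V E f)"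
      have s2: "s^2 = 1 / NF V E f" unfolding s_def using pos by (simp add: power_divide)
      define y where "y = (\<lambda>v. s * f' v)"
      have Ny: "NF V E y = 1" unfolding y_def NF_scale s2 Nf' using pos by simp
      have "y \<in> K0" unfolding K0_def S_def
      proof (clarsimp)
        fix v
        show "(v \<in> V \<longrightarrow> - 1 \<le> y v \<and> y v \<le> 1) \<and> (v \<notin> V \<longrightarrow> y v = 0)"
        proof (intro conjI impI)
          assume v: "v \<in> V"
          have "(y v)^2 \<le> real (hdeg E v) * (y v)^2"
            using nis v by (simp add: mult_le_cancel_right1)
          also have "\<dots> \<le> NF V E y" unfolding NF_def
            by (rule member_le_sum[OF v _ fin]) simp
          finally have "(y v)^2 \<le> 1" using Ny by simp
          then have "\<bar>y v\<bar> \<le> 1" by (simp add: abs_square_le_1)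
          then show "- 1 \<le> y v" "y v \<le> 1" by auto
        next
          assume "v \<notin> V" then show "y v = 0" unfolding y_def f'_def by simp
        qed
      qed
      then have "y \<in> K" unfolding K_def using Ny by simp
      then have "QF E g \<le> QF E y" using g by blast
      also have "QF E y = QF E f / NF V E f" unfolding y_def QF_scale s2 Qf' by simp
      finally show ?thesis using pos by (simp add: le_divide_eq)
    qed
  qed
  moreover have "NF V E g = 1" using g(1) unfolding K_def by simp
  ultimately show ?thesis by blast
qed

lemma spec:
  assumes fin: "finite V" and sub: "E \<subseteq> Pow V" and nis: "\<forall>v\<in>V. hdeg E v \<ge> 1" and ne: "V \<noteq> {}"
  shows "lap_eigenvalue V E (lambda_min V E) \<and> (\<forall>f. lambda_min V E * NF V E f \<le> QF E f)"
proof -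
  obtain g where g: "NF V E g = 1" "\<forall>f. QF E g * NF V E f \<le> QF E f"
    using minimizer[OF fin sub nis ne] by blast
  define rho where "rho = QF E g"
  have minf: "\<forall>f. rho * NF V E f \<le> QF E f" using g(2) unfolding rho_def by blast
  have eqg: "QF E g = rho * NF V E g" using g(1) unfolding rho_def by simp
  have "\<forall>v\<in>V. (\<Sum>w\<in>V. hlap E v w * g w) = rho * g v"
    by (rule rayleigh_to_eig[OF fin sub nis]) (use lagrange[OF fin sub _ minf eqg] in blast)
  moreover have "\<exists>v\<in>V. g v \<noteq> 0"
  proof (rule ccontr)
    assume "\<not> (\<exists>v\<in>V. g v \<noteq> 0)"
    then have "NF V E g = 0" unfolding NF_def by simp
    then show False using g(1) by simp
  qed
  ultimately have eig: "lap_eigenvalue V E rho" unfolding lap_eigenvalue_def by blast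
  have low: "rho \<le> mu" if "mu \<in> {mu. lap_eigenvalue V E mu}" for mu
  proof -
    from that obtain f where f: "\<exists>v\<in>V. f v \<noteq> 0" "\<forall>v\<in>V. (\<Sum>w\<in>V. hlap E v w * f w) = mu * f v"
      unfolding lap_eigenvalue_def by blast
    have Q: "QF E f = mu * NF V E f" by (rule eig_to_rayleigh[OF fin sub nis f(2)])
    have pos: "NF V E f > 0" using f(1) NF_pos[OF fin nis] by blast
    have "rho * NF V E f \<le> mu * NF V E f" using minf[rule_format, of f] Q by simp
    then show ?thesis using pos by simp
  qed
  have "lambda_min V E = rho" unfolding lambda_min_def
    by (rule Min_eqI[OF eig_finite[OF fin]]) (use low eig in auto)
  then show ?thesis using eig minf by simp
qed

lemma lambda_lt_1:
  assumes fin: "finite V" and sub: "E \<subseteq> Pow V" and nis: "\<forall>v\<in>V. hdeg E v \<ge> 1"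
    and e: "e \<in> E" "card e \<ge> 2" and lam: "\<forall>f. lam * NF V E f \<le> QF E f"
  shows "lam < 1"
proof -
  have fE: "finite E" using finite_E[OF fin sub] .
  obtain u w where uw: "u \<in> e" "w \<in> e" "u \<noteq> w"
  proof -
    have "e \<noteq> {}" using e(2) by auto
    then obtain u where u: "u \<in> e" by blast
    have "card (e - {u}) \<ge> 1" using e(2) u finite_edge[OF fin sub e(1)] by simp
    then obtain w where "w \<in> e - {u}" by (metis card.empty ex_in_conv not_one_le_zero)
    then show ?thesis using that u by blast
  qed
  have uV: "u \<in> V" and wV: "w \<in> V" using uw e(1) sub by auto
  define f where "f = (\<lambda>v. (if v = u then 1 else 0) - (if v = w then 1 else (0::real)))"
  define W where "W = real (card {e'\<in>E. u \<in> e' \<and> w \<in> e'})"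
  have W: "W \<ge> 1"
  proof -
    have "e \<in> {e'\<in>E. u \<in> e' \<and> w \<in> e'}" using uw e(1) by simp
    then have "card {e'\<in>E. u \<in> e' \<and> w \<in> e'} > 0" using fE by (auto simp: card_gt_0_iff)
    then show ?thesis unfolding W_def by simp
  qed
  have "QF E f = (\<Sum>e'\<in>E. (if u \<in> e' then 1 else 0) + (if w \<in> e' then 1 else 0) - 2 * (if u \<in> e' \<and> w \<in> e' then 1 else (0::real)))"
    unfolding QF_def
  proof (rule sum.cong[OF refl])
    fix e' assume "e' \<in> E"
    then have fe: "finite e'" using finite_edge[OF fin sub] by blast
    have "(\<Sum>v\<in>e'. f v) = (if u \<in> e' then 1 else 0) - (if w \<in> e' then 1 else 0)"
      unfolding f_def using fe by (simp add: sum_subtractf)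
    then show "(\<Sum>v\<in>e'. f v)^2 = (if u \<in> e' then 1 else 0) + (if w \<in> e' then 1 else 0) - 2 * (if u \<in> e' \<and> w \<in> e' then 1 else (0::real))"
      by auto
  qed
  also have "\<dots> = real (hdeg E u) + real (hdeg E w) - 2 * W"
    unfolding W_def hdeg_def
    by (simp add: sum.distrib sum_subtractf sum_distrib_left[symmetric] sum_indicator_card[OF fE])
  finally have Q: "QF E f = real (hdeg E u) + real (hdeg E w) - 2 * W" .
  have "NF V E f = (\<Sum>v\<in>V. (if v = u then real (hdeg E u) else 0) + (if v = w then real (hdeg E w) else 0))"
    unfolding NF_def f_def by (rule sum.cong[OF refl]) (use uw(3) in auto)
  also have "\<dots> = real (hdeg E u) + real (hdeg E w)" using uV wV fin by (simp add: sum.distrib)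
  finally have N: "NF V E f = real (hdeg E u) + real (hdeg E w)" .
  have pos: "real (hdeg E u) + real (hdeg E w) > 0" using nis uV by fastforce
  have "lam * (real (hdeg E u) + real (hdeg E w)) \<le> real (hdeg E u) + real (hdeg E w) - 2 * W"
    using lam Q N by metis
  also have "\<dots> < 1 * (real (hdeg E u) + real (hdeg E w))" using W by simp
  finally show ?thesis using pos by (simp only: mult_less_cancel_right)
qed


lemma partition_card:
  fixes col :: "'a \<Rightarrow> nat"
  assumes fe: "finite e" and cv: "\<forall>v\<in>e. col v \<in> {1..k}"
  shows "card e = (\<Sum>i\<in>{1..k}. card {v\<in>e. col v = i})"
proof -
  have "card e = (\<Sum>v\<in>e. (1::nat))" by simp
  also have "\<dots> = (\<Sum>v\<in>e. \<Sum>i\<in>{1..k}. if col v = i then 1 else 0)"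
    by (rule sum.cong[OF refl]) (use cv in auto)
  also have "\<dots> = (\<Sum>i\<in>{1..k}. \<Sum>v\<in>e. if col v = i then 1 else 0)" by (rule sum.swap)
  also have "\<dots> = (\<Sum>i\<in>{1..k}. card {v\<in>e. col v = i})"
    by (rule sum.cong[OF refl]) (simp add: sum.inter_filter[OF fe, symmetric])
  finally show ?thesis .
qed

lemma coloring_ineq:
  fixes col :: "'a \<Rightarrow> nat"
  assumes fin: "finite V" and sub: "E \<subseteq> Pow V" and unif: "\<forall>e\<in>E. card e = c"
    and colV: "\<forall>v\<in>V. col v \<in> {1..k}"
    and lam: "\<forall>f. rho * NF V E f \<le> QF E f"
  shows "rho * real c * real k * (real k - 1) * real (card E)
      + (real k)^2 * (\<Sum>e\<in>E. \<Sum>i\<in>{1..k}. real (card {v\<in>e. col v = i}) * (real d - real (card {v\<in>e. col v = i})))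
      \<le> real (card E) * ((real k)^2 * real d * real c - real k * (real c)^2)"
proof -
  have fE: "finite E" using finite_E[OF fin sub] .
  define K where "K = real k"
  define n where "n = (\<lambda>e i. real (card {v\<in>e. col v = i}))"
  define fi where "fi = (\<lambda>i v. K * (if col v = i then 1 else 0) - (1::real))"
  have sumn: "(\<Sum>i\<in>{1..k}. n e i) = real c" if e: "e \<in> E" for e
  proof -
    have fe: "finite e" using finite_edge[OF fin sub e] .
    have "\<forall>v\<in>e. col v \<in> {1..k}" using colV e sub by auto
    from partition_card[OF fe this] have "card e = (\<Sum>i\<in>{1..k}. card {v\<in>e. col v = i})" .
    then have "real (card e) = (\<Sum>i\<in>{1..k}. n e i)" unfolding n_def by simp
    then show ?thesis using unif e by simp
  qed
  have "(\<Sum>i\<in>{1..k}. rho * NF V E (fi i)) \<le> (\<Sum>i\<in>{1..k}. QF E (fi i))"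
    by (rule sum_mono) (use lam in blast)
  moreover have "(\<Sum>i\<in>{1..k}. rho * NF V E (fi i)) = rho * real c * K * (K - 1) * real (card E)"
  proof -
    have inner: "(\<Sum>i\<in>{1..k}. (fi i v)^2) = K^2 - K" if v: "v \<in> V" for v
    proof -
      have "(\<Sum>i\<in>{1..k}. (fi i v)^2) = (\<Sum>i\<in>{1..k}. (if col v = i then K^2 - 2 * K else 0) + 1)"
        unfolding fi_def by (rule sum.cong[OF refl]) (auto simp: power2_eq_square algebra_simps)
      also have "\<dots> = (K^2 - 2 * K) + K" using colV v unfolding K_def by (simp add: sum.distrib)
      finally show ?thesis by simp
    qed
    have "(\<Sum>i\<in>{1..k}. NF V E (fi i)) = (\<Sum>v\<in>V. real (hdeg E v) * (\<Sum>i\<in>{1..k}. (fi i v)^2))"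
      unfolding NF_def by (subst sum.swap) (simp add: sum_distrib_left)
    also have "\<dots> = (\<Sum>v\<in>V. real (hdeg E v) * (K^2 - K))"
      by (rule sum.cong[OF refl]) (metis inner)
    also have "\<dots> = (\<Sum>v\<in>V. real (hdeg E v)) * (K^2 - K)"
      by (rule sum_distrib_right[symmetric])
    also have "\<dots> = (\<Sum>e\<in>E. real (card e)) * (K^2 - K)"
      using handshake[OF fin sub] by simp
    also have "(\<Sum>e\<in>E. real (card e)) = real c * real (card E)"
      using unif by simp
    finally have NS: "(\<Sum>i\<in>{1..k}. NF V E (fi i)) = real c * real (card E) * (K^2 - K)" .
    have "(\<Sum>i\<in>{1..k}. rho * NF V E (fi i)) = rho * (\<Sum>i\<in>{1..k}. NF V E (fi i))"
      by (rule sum_distrib_left[symmetric])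
    also have "\<dots> = rho * (real c * real (card E) * (K^2 - K))" using NS by simp
    also have "\<dots> = rho * real c * K * (K - 1) * real (card E)"
    proof -
      have "K^2 - K = K * (K - 1)" by (simp add: power2_eq_square right_diff_distrib)
      then show ?thesis by (simp only: mult_ac)
    qed
    finally show ?thesis .
  qed
  moreover have "(\<Sum>i\<in>{1..k}. QF E (fi i)) = real (card E) * (K^2 * real d * real c - K * (real c)^2)
      - K^2 * (\<Sum>e\<in>E. \<Sum>i\<in>{1..k}. n e i * (real d - n e i))"
  proof -
    have per_edge: "(\<Sum>i\<in>{1..k}. (\<Sum>v\<in>e. fi i v)^2) = (K^2 * real d * real c - K * (real c)^2)
        - K^2 * (\<Sum>i\<in>{1..k}. n e i * (real d - n e i))" if e: "e \<in> E" for e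
    proof -
      have fe: "finite e" using finite_edge[OF fin sub e] .
      have S: "(\<Sum>v\<in>e. fi i v) = K * n e i - real c" for i
      proof -
        have "(\<Sum>v\<in>e. fi i v) = K * (\<Sum>v\<in>e. if col v = i then 1 else 0) - real (card e)"
          unfolding fi_def by (simp add: sum_subtractf sum_distrib_left)
        then show ?thesis unfolding n_def using sum_indicator_card[OF fe] unif e by simp
      qed
      have "(\<Sum>i\<in>{1..k}. (\<Sum>v\<in>e. fi i v)^2) = (\<Sum>i\<in>{1..k}. K^2 * (real d * n e i - n e i * (real d - n e i)) - 2 * K * real c * n e i + (real c)^2)"
        by (rule sum.cong[OF refl]) (simp add: S power2_eq_square algebra_simps)
      also have "\<dots> = K^2 * (real d * (\<Sum>i\<in>{1..k}. n e i) - (\<Sum>i\<in>{1..k}. n e i * (real d - n e i)))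
          - 2 * K * real c * (\<Sum>i\<in>{1..k}. n e i) + K * (real c)^2"
        unfolding K_def by (simp add: sum.distrib sum_subtractf sum_distrib_left right_diff_distrib mult_ac)
      also have "\<dots> = (K^2 * real d * real c - K * (real c)^2) - K^2 * (\<Sum>i\<in>{1..k}. n e i * (real d - n e i))"
        using sumn[OF e] by (simp add: power2_eq_square algebra_simps)
      finally show ?thesis .
    qed
    have "(\<Sum>i\<in>{1..k}. QF E (fi i)) = (\<Sum>e\<in>E. \<Sum>i\<in>{1..k}. (\<Sum>v\<in>e. fi i v)^2)"
      unfolding QF_def by (rule sum.swap)
    also have "\<dots> = (\<Sum>e\<in>E. (K^2 * real d * real c - K * (real c)^2)
        - K^2 * (\<Sum>i\<in>{1..k}. n e i * (real d - n e i)))"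
      by (rule sum.cong[OF refl]) (rule per_edge)
    also have "\<dots> = real (card E) * (K^2 * real d * real c - K * (real c)^2)
      - K^2 * (\<Sum>e\<in>E. \<Sum>i\<in>{1..k}. n e i * (real d - n e i))"
      by (simp add: sum_subtractf sum_distrib_left)
    finally show ?thesis .
  qed
  ultimately show ?thesis unfolding K_def n_def by linarith
qed

lemma exists_coloring:
  assumes fin: "finite V" and sub: "E \<subseteq> Pow V" and d: "d \<ge> 1"
  shows "\<exists>col. d_proper_coloring d (card V) V E col"
proof -
  obtain h where h: "bij_betw h V {0..<card V}" using ex_bij_betw_finite_nat[OF fin] by blast
  define col where "col = (\<lambda>v. h v + 1)"
  have "\<forall>v\<in>V. h v < card V" using bij_betw_apply[OF h] by auto
  then have "\<forall>v\<in>V. col v \<in> {1..card V}"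
    unfolding col_def by auto
  moreover have "card {v\<in>e. col v = i} \<le> d" if e: "e \<in> E" for e i
  proof -
    have fe: "finite e" using finite_edge[OF fin sub e] .
    have inj: "inj_on h V" using h bij_betw_imp_inj_on by blast
    have "card {v\<in>e. col v = i} \<le> Suc 0"
    proof (subst card_le_Suc0_iff_eq)
      show "finite {v\<in>e. col v = i}" using fe by simp
      show "\<forall>a\<in>{v\<in>e. col v = i}. \<forall>b\<in>{v\<in>e. col v = i}. a = b"
        using inj e sub unfolding col_def inj_on_def by auto
    qed
    then show ?thesis using d by simp
  qed
  ultimately show ?thesis unfolding d_proper_coloring_def by blast
qed

lemma part1:
  fixes V :: "'a set"
  assumes c2: "c \<ge> 2" and d1: "1 \<le> d" and dc: "d \<le> c - 1"
    and H: "uniform_hypergraph c V E" "no_isolated V E" "E \<noteq> {}"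
  shows "lambda_min V E < 1
    \<and> (real c - lambda_min V E) / (real d - lambda_min V E) \<le> real (chi_d d V E)
    \<and> (real (chi_d d V E) = (real c - lambda_min V E) / (real d - lambda_min V E) \<longrightarrow> d dvd c)"
proof -
  have fin: "finite V" and sub: "E \<subseteq> Pow V" and unif: "\<forall>e\<in>E. card e = c"
    using H(1) unfolding uniform_hypergraph_def by auto
  have nis: "\<forall>v\<in>V. hdeg E v \<ge> 1" using H(2) unfolding no_isolated_def by auto
  have fE: "finite E" using finite_E[OF fin sub] .
  obtain e0 where e0: "e0 \<in> E" using H(3) by blast
  have ce0: "card e0 = c" using unif e0 by blast
  have "e0 \<noteq> {}" using ce0 c2 by auto
  then have ne: "V \<noteq> {}" using e0 sub by auto
  define lam where "lam = lambda_min V E"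
  have lamb: "\<forall>f. lam * NF V E f \<le> QF E f" using spec[OF fin sub nis ne] unfolding lam_def by blast
  have lam1: "lam < 1" using lambda_lt_1[OF fin sub nis e0 _ lamb] ce0 c2 by simp
  define k where "k = chi_d d V E"
  have "\<exists>col. d_proper_coloring d k V E col"
    unfolding k_def chi_d_def by (rule LeastI_ex) (use exists_coloring[OF fin sub d1] in blast)
  then obtain col where col: "d_proper_coloring d k V E col" by blast
  have colV: "\<forall>v\<in>V. col v \<in> {1..k}" and prp: "\<forall>e\<in>E. \<forall>i. card {v\<in>e. col v = i} \<le> d"
    using col unfolding d_proper_coloring_def by auto
  have k1: "k \<ge> 1" using colV ne by fastforce
  define slack where "slack = (\<lambda>e. \<Sum>i\<in>{1..k}. real (card {v\<in>e. col v = i}) * (real d - real (card {v\<in>e. col v = i})))"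
  have slack_nn: "slack e \<ge> 0" if "e \<in> E" for e
    unfolding slack_def using prp that by (intro sum_nonneg mult_nonneg_nonneg) auto
  have ineq: "lam * real c * real k * (real k - 1) * real (card E) + (real k)^2 * (\<Sum>e\<in>E. slack e)
      \<le> real (card E) * ((real k)^2 * real d * real c - real k * (real c)^2)"
    unfolding slack_def by (rule coloring_ineq[OF fin sub unif colV lamb])
  have sl: "(\<Sum>e\<in>E. slack e) \<ge> 0" using slack_nn by (simp add: sum_nonneg)
  define P where "P = real c * real k * real (card E)"
  have P: "P > 0" unfolding P_def using c2 k1 fE H(3) by (simp add: card_gt_0_iff)
  have eqP: "real (card E) * ((real k)^2 * real d * real c - real k * (real c)^2) - lam * real c * real k * (real k - 1) * real (card E)
      = P * ((real k * real d - real c) - lam * (real k - 1))"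
    unfolding P_def by (simp add: power2_eq_square algebra_simps)
  have "P * ((real k * real d - real c) - lam * (real k - 1)) \<ge> (real k)^2 * (\<Sum>e\<in>E. slack e)"
    using ineq eqP by linarith
  moreover have "(real k)^2 * (\<Sum>e\<in>E. slack e) \<ge> 0" using sl by simp
  ultimately have "P * ((real k * real d - real c) - lam * (real k - 1)) \<ge> 0" by linarith
  then have main: "(real k * real d - real c) - lam * (real k - 1) \<ge> 0" using P
    by (simp add: zero_le_mult_iff)
  have dl: "real d - lam > 0" using lam1 d1 by linarith
  have bound: "(real c - lam) / (real d - lam) \<le> real k"
    using main dl by (simp add: divide_le_eq algebra_simps)
  have dvd: "d dvd c" if eq: "real k = (real c - lam) / (real d - lam)"
  proof -
    have "real k * (real d - lam) = real c - lam" using eq dl by (simp add: field_simps)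
    then have "(real k * real d - real c) - lam * (real k - 1) = 0" by (simp add: algebra_simps)
    then have "(real k)^2 * (\<Sum>e\<in>E. slack e) \<le> 0"
      using \<open>P * ((real k * real d - real c) - lam * (real k - 1)) \<ge> (real k)^2 * (\<Sum>e\<in>E. slack e)\<close> by simp
    then have "(\<Sum>e\<in>E. slack e) \<le> 0" using k1 by (simp add: mult_le_0_iff)
    then have "(\<Sum>e\<in>E. slack e) = 0" using sl by linarith
    then have "slack e0 = 0" using sum_nonneg_eq_0_iff[OF fE] slack_nn e0 by blast
    then have z: "\<forall>i\<in>{1..k}. real (card {v\<in>e0. col v = i}) * (real d - real (card {v\<in>e0. col v = i})) = 0"
      unfolding slack_def using prp e0
      by (subst (asm) sum_nonneg_eq_0_iff) (auto intro: mult_nonneg_nonneg)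
    have "\<forall>i\<in>{1..k}. d dvd card {v\<in>e0. col v = i}"
    proof
      fix i assume "i \<in> {1..k}"
      then have "real (card {v\<in>e0. col v = i}) = 0 \<or> real d - real (card {v\<in>e0. col v = i}) = 0"
        using z by simp
      then have "card {v\<in>e0. col v = i} = 0 \<or> card {v\<in>e0. col v = i} = d" by auto
      then show "d dvd card {v\<in>e0. col v = i}" by auto
    qed
    then have "d dvd (\<Sum>i\<in>{1..k}. card {v\<in>e0. col v = i})" by (blast intro: dvd_sum)
    moreover have "card e0 = (\<Sum>i\<in>{1..k}. card {v\<in>e0. col v = i})"
      by (rule partition_card[OF finite_edge[OF fin sub e0]]) (use colV e0 sub in auto)
    ultimately show ?thesis using ce0 by simp
  qed
  show ?thesis using lam1 bound dvd unfolding lam_def k_def by blast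
qed


lemma part3:
  fixes c d :: nat
  assumes c2: "c \<ge> 2" and d1: "1 \<le> d" and dc: "d \<le> c - 1" and dv: "d dvd c"
  shows "\<exists>(V :: nat set) E. uniform_hypergraph c V E \<and> no_isolated V E \<and> E \<noteq> {} \<and>
            real (chi_d d V E) = (real c - lambda_min V E) / (real d - lambda_min V E)"
proof -
  define V where "V = {0..<c}"
  define E where "E = {V}"
  have H1: "uniform_hypergraph c V E" unfolding uniform_hypergraph_def V_def E_def by auto
  have deg: "hdeg E v = 1" if "v \<in> V" for v
  proof -
    have "{e\<in>E. v\<in>e} = E" using that unfolding E_def by auto
    then show ?thesis unfolding hdeg_def E_def by simp
  qed
  have H2: "no_isolated V E" unfolding no_isolated_def using deg by simp
  have H3: "E \<noteq> {}" unfolding E_def by simp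
  have fin: "finite V" and sub: "E \<subseteq> Pow V" using H1 unfolding uniform_hypergraph_def by auto
  have nis: "\<forall>v\<in>V. hdeg E v \<ge> 1" using deg by simp
  have V01: "0 \<in> V" "1 \<in> V" using c2 unfolding V_def by auto
  then have ne: "V \<noteq> {}" by blast
  define lam where "lam = lambda_min V E"
  have sp: "lap_eigenvalue V E lam" "\<forall>f. lam * NF V E f \<le> QF E f"
    using spec[OF fin sub nis ne] unfolding lam_def by auto
  have lam_ge: "lam \<ge> 0"
  proof -
    obtain f where f: "\<exists>v\<in>V. f v \<noteq> 0" "\<forall>v\<in>V. (\<Sum>w\<in>V. hlap E v w * f w) = lam * f v"
      using sp(1) unfolding lap_eigenvalue_def by blast
    have Q: "QF E f = lam * NF V E f" by (rule eig_to_rayleigh[OF fin sub nis f(2)])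
    have pos: "NF V E f > 0" using f(1) NF_pos[OF fin nis] by blast
    have "0 \<le> lam * NF V E f" using Q QF_nonneg[of E f] by simp
    then show ?thesis using pos by (simp add: zero_le_mult_iff)
  qed
  have lam_le: "lam \<le> 0"
  proof -
    define f1 where "f1 = (\<lambda>v::nat. (if v = 0 then 1 else 0) - (if v = 1 then 1 else (0::real)))"
    have "(\<Sum>v\<in>V. f1 v) = 0" unfolding f1_def using V01 fin by (simp add: sum_subtractf)
    then have Q: "QF E f1 = 0" unfolding QF_def E_def by simp
    have pos: "NF V E f1 > 0" using NF_pos[OF fin nis V01(1), of f1] unfolding f1_def by simp
    have "lam * NF V E f1 \<le> 0" using sp(2) Q by metis
    then show ?thesis using pos by (simp add: mult_le_0_iff)
  qed
  have lam0: "lam = 0" using lam_ge lam_le by simp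
  define q where "q = c div d"
  have cq: "c = q * d" unfolding q_def using dv by simp
  have dpos: "d > 0" using d1 by simp
  define col where "col = (\<lambda>v::nat. v div d + 1)"
  have "d_proper_coloring d q V E col"
    unfolding d_proper_coloring_def
  proof (intro conjI ballI allI)
    fix v assume "v \<in> V"
    then have "v < q * d" using cq unfolding V_def by simp
    then have "v div d < q" by (rule less_mult_imp_div_less)
    then show "col v \<in> {1..q}" unfolding col_def by simp
  next
    fix e i assume "e \<in> E"
    then have e: "e = V" unfolding E_def by simp
    have "{v\<in>e. col v = i} \<subseteq> {(i - 1) * d ..< (i - 1) * d + d}"
    proof
      fix v assume "v \<in> {v\<in>e. col v = i}"
      then have iv: "i - 1 = v div d" unfolding col_def by auto
      have "v div d * d \<le> v" by (rule div_times_less_eq_dividend)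
      moreover have "v < v div d * d + d"
        using div_mult_mod_eq[of v d] mod_less_divisor[OF dpos, of v] by linarith
      ultimately show "v \<in> {(i - 1) * d ..< (i - 1) * d + d}" using iv by simp
    qed
    then have "card {v\<in>e. col v = i} \<le> card {(i - 1) * d ..< (i - 1) * d + d}"
      by (rule card_mono[rotated]) simp
    then show "card {v\<in>e. col v = i} \<le> d" by simp
  qed
  then have "chi_d d V E \<le> q" unfolding chi_d_def by (blast intro: Least_le)
  then have up: "real (chi_d d V E) \<le> real c / real d"
    using real_of_nat_div[OF dv] unfolding q_def by simp
  have low: "(real c - lam) / (real d - lam) \<le> real (chi_d d V E)"
    using part1[OF c2 d1 dc H1 H2 H3] unfolding lam_def by blast
  have "real (chi_d d V E) = (real c - lam) / (real d - lam)"
    using up low lam0 by simp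
  then show ?thesis using H1 H2 H3 unfolding lam_def by blast
qed

theorem mainTheorem6:
  fixes c d :: nat
  assumes "c \<ge> 2" and "1 \<le> d" and "d \<le> c - 1"
  shows "(\<forall>(V :: 'a set) E. uniform_hypergraph c V E \<and> no_isolated V E \<and> E \<noteq> {} \<longrightarrow>
            lambda_min V E < 1 \<and>
            real (chi_d d V E) \<ge> (real c - lambda_min V E) / (real d - lambda_min V E))
       \<and> ((\<exists>(V :: 'a set) E. uniform_hypergraph c V E \<and> no_isolated V E \<and> E \<noteq> {} \<and>
            real (chi_d d V E) = (real c - lambda_min V E) / (real d - lambda_min V E)) \<longrightarrow> d dvd c)
       \<and> (d dvd c \<longrightarrow> (\<exists>(V :: nat set) E. uniform_hypergraph c V E \<and> no_isolated V E \<and> E \<noteq> {} \<and>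
            real (chi_d d V E) = (real c - lambda_min V E) / (real d - lambda_min V E)))"
proof (intro conjI)
  show "\<forall>(V :: 'a set) E. uniform_hypergraph c V E \<and> no_isolated V E \<and> E \<noteq> {} \<longrightarrow>
            lambda_min V E < 1 \<and>
            real (chi_d d V E) \<ge> (real c - lambda_min V E) / (real d - lambda_min V E)"
    using part1[OF assms] by blast
  show "(\<exists>(V :: 'a set) E. uniform_hypergraph c V E \<and> no_isolated V E \<and> E \<noteq> {} \<and>
            real (chi_d d V E) = (real c - lambda_min V E) / (real d - lambda_min V E)) \<longrightarrow> d dvd c"
    using part1[OF assms] by blast
  show "d dvd c \<longrightarrow> (\<exists>(V :: nat set) E. uniform_hypergraph c V E \<and> no_isolated V E \<and> E \<noteq> {} \<and>
            real (chi_d d V E) = (real c - lambda_min V E) / (real d - lambda_min V E))"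
    using part3[OF assms] by blast
qed

end
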